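(* Let $\{\mathcal{C}_n\}$ be a sequence of binary linear codes with blocklengths $N_n\to\infty$ and rates $r_n\to r$ for some $r\in(0,1)$. Suppose there are sequences $0\le a_n<b_n\le1$ with $a_n\to0$, $b_n\to1$, and $w_n\to\infty$ such that the average EXIT function $h^{(n)}$ of $\mathcal{C}_n$ satisfies $$\frac{d h^{(n)}(p)}{dp}\ge w_n\log(N_n)\,h^{(n)}(p)\big(1-h^{(n)}(p)\big)\quad\text{for all }a_n<p<b_n.$$ Then $\{\mathcal{C}_n\}$ is capacity achieving on the BEC under block-MAP decoding.
   Context: Binary linear codes are assumed proper and of minimum distance at least $2$; rate $=K/N$; $\log$ is natural. A uniform codeword $\underline{X}$ is sent over $\mathrm{BEC}(p)$ (each bit erased independently with probability $p$), giving $\underline{Y}$. The average EXIT function is $h(p)=\frac1N\sum_{i=1}^N H(X_i\mid\underline{Y}_{\sim i})$ (entropy in bits; $\underline{Y}_{\sim i}$ omits coordinate $i$). $P_B(p)$ is the probability that $\underline{X}$ is not uniquely determined by $\underline{Y}$. A sequence of codes with rates $r_n\to r\in(0,1)$ is capacity achieving under block-MAP decoding if $\lim_n P_B^{(n)}(p)=0$ for every $p\in[0,1-r)$. *)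

theory Defs
  imports "HOL-Analysis.Analysis"
begin

text \<open>Binary vectors of length N are bool lists of length N; a received BEC symbol is
  a bool option (None = erasure).\<close>

definition xor_vec :: "bool list \<Rightarrow> bool list \<Rightarrow> bool list" where
  "xor_vec x y = map2 (\<noteq>) x y"

definition weight :: "bool list \<Rightarrow> nat" where
  "weight x = length (filter id x)"

definition binary_linear_code :: "nat \<Rightarrow> bool list set \<Rightarrow> bool" where
  "binary_linear_code N C \<longleftrightarrow>
     C \<subseteq> {x. length x = N} \<and> replicate N False \<in> C \<and>
     (\<forall>x\<in>C. \<forall>y\<in>C. xor_vec x y \<in> C)"

definition proper_code :: "nat \<Rightarrow> bool list set \<Rightarrow> bool" where
  "proper_code N C \<longleftrightarrow> (\<forall>i<N. \<exists>c\<in>C. c ! i)"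

definition min_dist_ge :: "nat \<Rightarrow> bool list set \<Rightarrow> bool" where
  "min_dist_ge d C \<longleftrightarrow> (\<forall>x\<in>C. \<forall>y\<in>C. x \<noteq> y \<longrightarrow> weight (xor_vec x y) \<ge> d)"

text \<open>Rate K/N, where K = dim C, i.e. |C| = 2^K.\<close>
definition code_rate :: "nat \<Rightarrow> bool list set \<Rightarrow> real" where
  "code_rate N C = log 2 (real (card C)) / real N"

definition bec_W :: "real \<Rightarrow> bool \<Rightarrow> bool option \<Rightarrow> real" where
  "bec_W p x y = (case y of None \<Rightarrow> p | Some b \<Rightarrow> (if b = x then 1 - p else 0))"

definition joint_prob :: "nat \<Rightarrow> bool list set \<Rightarrow> real \<Rightarrow> bool list \<Rightarrow> bool option list \<Rightarrow> real" where
  "joint_prob N C p x y = (1 / real (card C)) * (\<Prod>j<N. bec_W p (x ! j) (y ! j))"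

text \<open>Observations of Y with coordinate i omitted (coordinate i fixed to a dummy None).\<close>
definition obs_omit :: "nat \<Rightarrow> nat \<Rightarrow> bool option list set" where
  "obs_omit N i = {z. length z = N \<and> z ! i = None}"

definition joint_omit :: "nat \<Rightarrow> bool list set \<Rightarrow> real \<Rightarrow> nat \<Rightarrow> bool \<Rightarrow> bool option list \<Rightarrow> real" where
  "joint_omit N C p i b z =
     (\<Sum>x\<in>{x\<in>C. x ! i = b}. (1 / real (card C)) * (\<Prod>j\<in>{..<N} - {i}. bec_W p (x ! j) (z ! j)))"

definition marg_omit :: "nat \<Rightarrow> bool list set \<Rightarrow> real \<Rightarrow> nat \<Rightarrow> bool option list \<Rightarrow> real" where
  "marg_omit N C p i z = (\<Sum>b\<in>UNIV. joint_omit N C p i b z)"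

definition cond_entropy_omit :: "nat \<Rightarrow> bool list set \<Rightarrow> real \<Rightarrow> nat \<Rightarrow> real" where
  "cond_entropy_omit N C p i =
     - (\<Sum>z\<in>obs_omit N i. \<Sum>b\<in>UNIV.
          (let q = joint_omit N C p i b z
           in if q > 0 then q * log 2 (q / marg_omit N C p i z) else 0))"

definition exit_fun :: "nat \<Rightarrow> bool list set \<Rightarrow> real \<Rightarrow> real" where
  "exit_fun N C p = (1 / real N) * (\<Sum>i<N. cond_entropy_omit N C p i)"

definition compatible :: "bool list \<Rightarrow> bool option list \<Rightarrow> bool" where
  "compatible x y \<longleftrightarrow> (\<forall>j<length y. y ! j = None \<or> y ! j = Some (x ! j))"

definition block_error :: "nat \<Rightarrow> bool list set \<Rightarrow> real \<Rightarrow> real" where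
  "block_error N C p =
     (\<Sum>x\<in>C. \<Sum>y\<in>{y::bool option list. length y = N}.
        if (\<exists>x'\<in>C. x' \<noteq> x \<and> compatible x' y) then joint_prob N C p x y else 0)"

definition capacity_achieving ::
  "(nat \<Rightarrow> nat) \<Rightarrow> (nat \<Rightarrow> bool list set) \<Rightarrow> real \<Rightarrow> bool" where
  "capacity_achieving N C r \<longleftrightarrow>
     (\<forall>p. 0 \<le> p \<and> p < 1 - r \<longrightarrow> (\<lambda>n. block_error (N n) (C n) p) \<longlonglongrightarrow> 0)"

end

theory Submission
  imports Defs
begin


definition vanish :: "bool list set \<Rightarrow> nat set \<Rightarrow> bool list set" where
  "vanish C S = {c\<in>C. \<forall>j\<in>S. \<not> c!j}"
definition AA :: "bool list set \<Rightarrow> nat set \<Rightarrow> nat" where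
  "AA C S = card (vanish C S)"
definition om :: "real \<Rightarrow> nat set \<Rightarrow> nat set \<Rightarrow> real" where
  "om p I S = (\<Prod>j\<in>I. if j\<in>S then 1-p else p)"
definition mk :: "nat \<Rightarrow> bool list \<Rightarrow> nat set \<Rightarrow> bool option list" where
  "mk N x S = map (\<lambda>j. if j\<in>S then Some (x!j) else None) [0..<N]"
definition DD :: "bool list set \<Rightarrow> nat set \<Rightarrow> nat \<Rightarrow> real" where
  "DD C S i = log 2 (AA C S) - log 2 (AA C (insert i S))"

lemma mk_nth: "j < N \<Longrightarrow> mk N x S ! j = (if j\<in>S then Some (x!j) else None)"
  by (simp add: mk_def)

lemma length_mk[simp]: "length (mk N x S) = N" by (simp add: mk_def)

lemma finite_Z: "finite {z::bool option list. length z = N \<and> P z}"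
proof -
  have "finite {z::bool option list. set z \<subseteq> UNIV \<and> length z = N}"
    by (rule finite_lists_length_eq) simp
  then show ?thesis by (rule finite_subset[rotated]) auto
qed

lemma sum_obs:
  assumes x: "length x = N" and I: "I \<subseteq> {..<N}"
  shows "(\<Sum>z\<in>{z. length z = N \<and> (\<forall>j<N. j\<notin>I \<longrightarrow> z!j = None)}.
            (\<Prod>j\<in>I. bec_W p (x!j) (z!j)) * \<phi> z)
       = (\<Sum>S\<in>Pow I. om p I S * \<phi> (mk N x S))"
proof -
  define Z where "Z = {z::bool option list. length z = N \<and> (\<forall>j<N. j\<notin>I \<longrightarrow> z!j = None)}"
  have finI: "finite I" using I finite_subset by blast
  have fZ: "finite Z" unfolding Z_def by (rule finite_Z)
  have img: "mk N x ` Pow I \<subseteq> Z" unfolding Z_def using I by (auto simp: mk_nth)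
  have zero: "(\<Prod>j\<in>I. bec_W p (x!j) (z!j)) * \<phi> z = 0" if z: "z \<in> Z - mk N x ` Pow I" for z
  proof -
    have "\<exists>j\<in>I. \<exists>b. z!j = Some b \<and> b \<noteq> x!j"
    proof (rule ccontr)
      assume "\<not> ?thesis"
      hence h: "\<And>j b. j\<in>I \<Longrightarrow> z!j = Some b \<Longrightarrow> b = x!j" by blast
      have "z = mk N x {j\<in>I. z!j \<noteq> None}"
      proof (rule nth_equalityI)
        show "length z = length (mk N x {j \<in> I. z ! j \<noteq> None})" using z Z_def by simp
        fix j assume "j < length z"
        then show "z ! j = mk N x {j \<in> I. z ! j \<noteq> None} ! j"
          using z h unfolding Z_def by (cases "z!j") (auto simp: mk_nth)
      qed
      then show False using z by blast
    qed
    then obtain j b where "j\<in>I" "z!j = Some b" "b \<noteq> x!j" by blast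
    then have "bec_W p (x!j) (z!j) = 0" by (auto simp: bec_W_def)
    then have "(\<Prod>j\<in>I. bec_W p (x!j) (z!j)) = 0" using \<open>j\<in>I\<close> finI
      by (meson prod_zero)
    then show ?thesis by simp
  qed
  have inj: "inj_on (mk N x) (Pow I)"
  proof (rule inj_onI)
    fix S T assume S: "S \<in> Pow I" and T: "T \<in> Pow I" and eq: "mk N x S = mk N x T"
    show "S = T"
    proof (rule set_eqI)
      fix j
      show "j \<in> S \<longleftrightarrow> j \<in> T"
      proof (cases "j < N")
        case True
        then show ?thesis using arg_cong[OF eq, of "\<lambda>z. z!j"] by (auto simp: mk_nth split: if_splits)
      next
        case False
        then show ?thesis using S T I by auto
      qed
    qed
  qed
  have "(\<Sum>z\<in>Z. (\<Prod>j\<in>I. bec_W p (x!j) (z!j)) * \<phi> z)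
      = (\<Sum>z\<in>mk N x ` Pow I. (\<Prod>j\<in>I. bec_W p (x!j) (z!j)) * \<phi> z)"
    by (rule sum.mono_neutral_right[OF fZ img]) (use zero in blast)
  also have "\<dots> = (\<Sum>S\<in>Pow I. (\<Prod>j\<in>I. bec_W p (x!j) (mk N x S!j)) * \<phi> (mk N x S))"
    by (rule sum.reindex[OF inj, unfolded comp_def])
  also have "\<dots> = (\<Sum>S\<in>Pow I. om p I S * \<phi> (mk N x S))"
  proof (rule sum.cong[OF refl])
    fix S assume "S \<in> Pow I"
    have "(\<Prod>j\<in>I. bec_W p (x!j) (mk N x S!j)) = om p I S"
      unfolding om_def using I by (intro prod.cong) (auto simp: mk_nth bec_W_def)
    then show "(\<Prod>j\<in>I. bec_W p (x!j) (mk N x S!j)) * \<phi> (mk N x S) = om p I S * \<phi> (mk N x S)" by simp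
  qed
  finally show ?thesis unfolding Z_def .
qed



lemma length_xor[simp]: "length (xor_vec x y) = min (length x) (length y)"
  by (simp add: xor_vec_def)

lemma xor_nth: "j < length x \<Longrightarrow> j < length y \<Longrightarrow> xor_vec x y ! j = (x!j \<noteq> y!j)"
  by (simp add: xor_vec_def)

lemma xor_inv: "length x = length y \<Longrightarrow> xor_vec x (xor_vec x y) = y"
  by (rule nth_equalityI) (auto simp: xor_nth)

lemma blc_len: "binary_linear_code N C \<Longrightarrow> c \<in> C \<Longrightarrow> length c = N"
  unfolding binary_linear_code_def by auto

lemma blc_xor: "binary_linear_code N C \<Longrightarrow> x \<in> C \<Longrightarrow> y \<in> C \<Longrightarrow> xor_vec x y \<in> C"
  unfolding binary_linear_code_def by auto

lemma blc_zero: "binary_linear_code N C \<Longrightarrow> replicate N False \<in> C"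
  unfolding binary_linear_code_def by auto

lemma blc_finite: "binary_linear_code N C \<Longrightarrow> finite C"
proof -
  assume h: "binary_linear_code N C"
  have "finite {z::bool list. set z \<subseteq> UNIV \<and> length z = N}"
    by (rule finite_lists_length_eq) simp
  moreover have "C \<subseteq> {z::bool list. set z \<subseteq> UNIV \<and> length z = N}" using h blc_len by auto
  ultimately show ?thesis by (rule finite_subset[rotated])
qed

lemma blc_card_pos: "binary_linear_code N C \<Longrightarrow> card C > 0"
  using blc_finite blc_zero card_gt_0_iff by blast

lemma card_xor_shift:
  assumes C: "binary_linear_code N C" and x: "x \<in> C"
  shows "card {y\<in>C. Q (xor_vec x y)} = card {c\<in>C. Q c}"
proof (rule bij_betw_same_card)
  have inv: "xor_vec x (xor_vec x a) = a" if "a \<in> C" for a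
    using xor_inv blc_len[OF C x] blc_len[OF C that] by simp
  show "bij_betw (xor_vec x) {y\<in>C. Q (xor_vec x y)} {c\<in>C. Q c}"
  proof (rule bij_betw_byWitness[where f'="xor_vec x"])
    show "\<forall>a\<in>{y \<in> C. Q (xor_vec x y)}. xor_vec x (xor_vec x a) = a"
      using inv by blast
    show "\<forall>a'\<in>{c \<in> C. Q c}. xor_vec x (xor_vec x a') = a'"
      using inv by blast
    show "xor_vec x ` {y \<in> C. Q (xor_vec x y)} \<subseteq> {c \<in> C. Q c}"
      using blc_xor[OF C x] by blast
    show "xor_vec x ` {c \<in> C. Q c} \<subseteq> {y \<in> C. Q (xor_vec x y)}"
    proof
      fix y assume "y \<in> xor_vec x ` {c \<in> C. Q c}"
      then obtain c where c: "c \<in> C" "Q c" "y = xor_vec x c" by blast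
      then show "y \<in> {y \<in> C. Q (xor_vec x y)}" using inv[OF c(1)] blc_xor[OF C x c(1)] by simp
    qed
  qed
qed

lemma card_agree:
  assumes C: "binary_linear_code N C" and x: "x \<in> C" and T: "T \<subseteq> {..<N}"
  shows "card {y\<in>C. \<forall>j\<in>T. y!j = x!j} = AA C T"
proof -
  have "{y\<in>C. \<forall>j\<in>T. y!j = x!j} = {y\<in>C. (\<lambda>c. \<forall>j\<in>T. \<not> c!j) (xor_vec x y)}"
  proof (rule Collect_cong)
    fix y
    show "(y \<in> C \<and> (\<forall>j\<in>T. y ! j = x ! j)) = (y \<in> C \<and> (\<forall>j\<in>T. \<not> xor_vec x y ! j))"
    proof (cases "y \<in> C")
      case True
      then have "length y = N" "length x = N" using blc_len[OF C] x by auto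
      then have "\<forall>j\<in>T. xor_vec x y ! j = (x!j \<noteq> y!j)" using T by (auto simp: xor_nth)
      then show ?thesis using True by auto
    qed simp
  qed
  then show ?thesis using card_xor_shift[OF C x, of "\<lambda>c. \<forall>j\<in>T. \<not> c!j"]
    by (simp add: AA_def vanish_def)
qed

lemma AA_pos: "binary_linear_code N C \<Longrightarrow> S \<subseteq> {..<N} \<Longrightarrow> AA C S \<ge> 1"
proof -
  assume C: "binary_linear_code N C" and S: "S \<subseteq> {..<N}"
  have "replicate N False \<in> vanish C S" using blc_zero[OF C] S by (auto simp: vanish_def)
  moreover have "finite (vanish C S)" using blc_finite[OF C] by (simp add: vanish_def)
  ultimately show ?thesis unfolding AA_def
    by (metis One_nat_def Suc_leI card_gt_0_iff empty_iff)
qed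

lemma AA_le: "binary_linear_code N C \<Longrightarrow> AA C S \<le> card C"
  unfolding AA_def vanish_def by (intro card_mono blc_finite) auto

lemma AA_empty: "AA C {} = card C" by (simp add: AA_def vanish_def)

lemma AA_mono: "binary_linear_code N C \<Longrightarrow> AA C (insert i S) \<le> AA C S"
  unfolding AA_def vanish_def by (intro card_mono) (auto dest: blc_finite)

lemma AA_half:
  assumes C: "binary_linear_code N C" and i: "i < N" and c: "c \<in> C" "\<forall>j\<in>S. \<not> c!j" "c!i"
    and S: "S \<subseteq> {..<N}"
  shows "AA C S = 2 * AA C (insert i S)"
proof -
  have fin: "finite C" using blc_finite[OF C] .
  have split: "vanish C S = vanish C (insert i S) \<union> {c'\<in>vanish C S. c'!i}"
    by (auto simp: vanish_def)
  have disj: "vanish C (insert i S) \<inter> {c'\<in>vanish C S. c'!i} = {}" by (auto simp: vanish_def)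
  have eq: "{c'\<in>vanish C S. c'!i} = {y\<in>C. (\<lambda>d. d \<in> vanish C (insert i S)) (xor_vec c y)}"
  proof (rule set_eqI)
    fix y
    show "y \<in> {c'\<in>vanish C S. c'!i} \<longleftrightarrow> y \<in> {y\<in>C. (\<lambda>d. d \<in> vanish C (insert i S)) (xor_vec c y)}"
    proof (cases "y \<in> C")
      case True
      then have l: "length y = N" "length c = N" using blc_len[OF C] c by auto
      have xc: "xor_vec c y \<in> C" using blc_xor[OF C c(1) True] .
      have xn: "\<forall>j\<in>insert i S. xor_vec c y ! j = (c!j \<noteq> y!j)" using l S i by (auto simp: xor_nth)
      show ?thesis
      proof
        assume "y \<in> {c'\<in>vanish C S. c'!i}"
        then show "y \<in> {y\<in>C. (\<lambda>d. d \<in> vanish C (insert i S)) (xor_vec c y)}"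
          using True xc c xn by (auto simp: vanish_def)
      next
        assume "y \<in> {y\<in>C. (\<lambda>d. d \<in> vanish C (insert i S)) (xor_vec c y)}"
        then show "y \<in> {c'\<in>vanish C S. c'!i}" using True xc c xn by (auto simp: vanish_def)
      qed
    qed (auto simp: vanish_def)
  qed
  have "card {c'\<in>vanish C S. c'!i} = card {d\<in>C. d \<in> vanish C (insert i S)}"
    unfolding eq by (rule card_xor_shift[OF C c(1)])
  also have "{d\<in>C. d \<in> vanish C (insert i S)} = vanish C (insert i S)" by (auto simp: vanish_def)
  finally have "card {c'\<in>vanish C S. c'!i} = AA C (insert i S)" by (simp add: AA_def)
  moreover have "card (vanish C S) = card (vanish C (insert i S)) + card {c'\<in>vanish C S. c'!i}"
    by (subst split, rule card_Un_disjoint) (use fin disj in \<open>auto simp: vanish_def\<close>)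
  ultimately show ?thesis by (simp add: AA_def)
qed

lemma DD_cases:
  assumes C: "binary_linear_code N C" and i: "i < N" and S: "S \<subseteq> {..<N}"
  shows "(DD C S i = 0 \<and> \<not>(\<exists>c\<in>C. (\<forall>j\<in>S. \<not> c!j) \<and> c!i)) \<or>
         (DD C S i = 1 \<and> (\<exists>c\<in>C. (\<forall>j\<in>S. \<not> c!j) \<and> c!i))"
proof (cases "\<exists>c\<in>C. (\<forall>j\<in>S. \<not> c!j) \<and> c!i")
  case True
  then obtain c where "c\<in>C" "\<forall>j\<in>S. \<not> c!j" "c!i" by blast
  then have h: "AA C S = 2 * AA C (insert i S)" using AA_half[OF C i _ _ _ S] by blast
  have pos: "AA C (insert i S) \<ge> 1" using AA_pos[OF C] S i by auto
  have "DD C S i = log 2 (2 * real (AA C (insert i S))) - log 2 (AA C (insert i S))"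
    unfolding DD_def h by simp
  also have "\<dots> = 1" using pos by (simp add: log_mult)
  finally show ?thesis using True by simp
next
  case False
  then have "vanish C S = vanish C (insert i S)" by (auto simp: vanish_def)
  then show ?thesis using False by (simp add: DD_def AA_def)
qed

lemma DD_ge0: "binary_linear_code N C \<Longrightarrow> i < N \<Longrightarrow> S \<subseteq> {..<N} \<Longrightarrow> DD C S i \<ge> 0"
  using DD_cases[of N C i S] by linarith
lemma DD_le1: "binary_linear_code N C \<Longrightarrow> i < N \<Longrightarrow> S \<subseteq> {..<N} \<Longrightarrow> DD C S i \<le> 1"
  using DD_cases[of N C i S] by linarith



lemma sum_bool_split:
  fixes C :: "bool list set" and g :: "bool list \<Rightarrow> bool \<Rightarrow> 'b::comm_monoid_add"
  assumes "finite C"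
  shows "(\<Sum>b\<in>UNIV. \<Sum>x\<in>{x\<in>C. x!i = b}. g x b) = (\<Sum>x\<in>C. g x (x!i))"
proof -
  have "(\<Sum>b\<in>UNIV. \<Sum>x\<in>{x\<in>C. x!i = b}. g x b)
      = (\<Sum>x\<in>{x\<in>C. x!i}. g x True) + (\<Sum>x\<in>{x\<in>C. \<not> x!i}. g x False)"
    by (simp add: UNIV_bool add.commute)
  also have "\<dots> = (\<Sum>x\<in>{x\<in>C. x!i}. g x (x!i)) + (\<Sum>x\<in>{x\<in>C. \<not> x!i}. g x (x!i))"
    by (intro arg_cong2[where f="(+)"] sum.cong) auto
  also have "\<dots> = (\<Sum>x\<in>{x\<in>C. x!i} \<union> {x\<in>C. \<not> x!i}. g x (x!i))"
    by (rule sum.union_disjoint[symmetric]) (use assms in auto)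
  also have "{x\<in>C. x!i} \<union> {x\<in>C. \<not> x!i} = C" by auto
  finally show ?thesis .
qed

lemma sum_indicator_const:
  "finite A \<Longrightarrow> (\<Sum>y\<in>A. if Q y then c else 0) = (c::real) * card {y\<in>A. Q y}"
  by (simp add: sum.If_cases Int_def conj_commute)

lemma bec_W_nonneg: "0 \<le> p \<Longrightarrow> p \<le> 1 \<Longrightarrow> bec_W p x y \<ge> 0"
  by (auto simp: bec_W_def split: option.splits)

lemma P_mk:
  assumes y: "length y = N" and x: "length x = N" and I: "I \<subseteq> {..<N}" and S: "S \<subseteq> I"
  shows "(\<Prod>j\<in>I. bec_W p (y!j) (mk N x S ! j)) = (if \<forall>j\<in>S. y!j = x!j then om p I S else 0)"
proof (cases "\<forall>j\<in>S. y!j = x!j")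
  case True
  then show ?thesis unfolding om_def using I
    by (auto intro!: prod.cong simp: mk_nth bec_W_def)
next
  case False
  then obtain j where j: "j\<in>S" "y!j \<noteq> x!j" by blast
  have "bec_W p (y!j) (mk N x S ! j) = 0" using j S I by (auto simp: mk_nth bec_W_def)
  moreover have "finite I" using I finite_subset by blast
  ultimately have "(\<Prod>j\<in>I. bec_W p (y!j) (mk N x S ! j)) = 0" using j S by (meson prod_zero subsetD)
  then show ?thesis using False by (simp only: if_False)
qed



lemma cond_entropy_formula:
  assumes C: "binary_linear_code N C" and i: "i < N" and p0: "0 \<le> p" and p1: "p \<le> 1"
  shows "cond_entropy_omit N C p i = (\<Sum>S\<in>Pow ({..<N}-{i}). om p ({..<N}-{i}) S * DD C S i)"
proof -
  define I where "I = {..<N} - {i}"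
  define k where "k = real (card C)"
  define P where "P x z = (\<Prod>j\<in>I. bec_W p (x!j) (z!j))" for x z
  define q where "q b z = joint_omit N C p i b z" for b z
  define m where "m z = marg_omit N C p i z" for z
  have finC: "finite C" using blc_finite[OF C] .
  have kpos: "k > 0" using blc_card_pos[OF C] by (simp add: k_def)
  have I: "I \<subseteq> {..<N}" by (auto simp: I_def)
  have q': "q b z = (\<Sum>x\<in>{x\<in>C. x!i=b}. (1/k) * P x z)" for b z
    by (simp add: q_def joint_omit_def P_def I_def k_def)
  have P_nn: "P x z \<ge> 0" for x z unfolding P_def using p0 p1 by (intro prod_nonneg bec_W_nonneg) auto
  have q_nn: "q b z \<ge> 0" for b z unfolding q' using kpos P_nn by (intro sum_nonneg) auto
  have m': "m z = (\<Sum>x\<in>C. (1/k) * P x z)" for z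
  proof -
    have "m z = (\<Sum>b\<in>UNIV. \<Sum>x\<in>{x\<in>C. x!i=b}. (\<lambda>x b. (1/k) * P x z) x b)"
      unfolding m_def marg_omit_def q_def[symmetric] q' by simp
    also have "\<dots> = (\<Sum>x\<in>C. (1/k) * P x z)" by (rule sum_bool_split[OF finC])
    finally show ?thesis .
  qed
  have obs: "obs_omit N i = {z. length z = N \<and> (\<forall>j<N. j\<notin>I \<longrightarrow> z!j = None)}"
    using i by (auto simp: obs_omit_def I_def)
  have step1: "cond_entropy_omit N C p i = - (\<Sum>z\<in>obs_omit N i. \<Sum>b\<in>UNIV. q b z * log 2 (q b z / m z))"
    unfolding cond_entropy_omit_def q_def[symmetric] m_def[symmetric] Let_def
  proof (intro arg_cong[where f=uminus] sum.cong refl)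
    fix z b
    show "(if 0 < q b z then q b z * log 2 (q b z / m z) else 0) = q b z * log 2 (q b z / m z)"
      using q_nn[of b z] by auto
  qed
  have step2: "(\<Sum>b\<in>UNIV. q b z * log 2 (q b z / m z)) = (\<Sum>x\<in>C. (1/k) * P x z * log 2 (q (x!i) z / m z))" for z
  proof -
    have "(\<Sum>b\<in>UNIV. q b z * log 2 (q b z / m z))
        = (\<Sum>b\<in>UNIV. \<Sum>x\<in>{x\<in>C. x!i=b}. (\<lambda>x b. (1/k) * P x z * log 2 (q b z / m z)) x b)"
      unfolding q'[of _ z] by (simp add: sum_distrib_right)
    also have "\<dots> = (\<Sum>x\<in>C. (1/k) * P x z * log 2 (q (x!i) z / m z))" by (rule sum_bool_split[OF finC])
    finally show ?thesis .
  qed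
  have step4: "(\<Sum>z\<in>obs_omit N i. (1/k) * P x z * log 2 (q (x!i) z / m z))
      = (\<Sum>S\<in>Pow I. om p I S * ((1/k) * log 2 (q (x!i) (mk N x S) / m (mk N x S))))"
    if x: "x \<in> C" for x
  proof -
    have "(\<Sum>z\<in>obs_omit N i. (1/k) * P x z * log 2 (q (x!i) z / m z))
        = (\<Sum>z\<in>{z. length z = N \<and> (\<forall>j<N. j\<notin>I \<longrightarrow> z!j = None)}.
            (\<Prod>j\<in>I. bec_W p (x!j) (z!j)) * ((1/k) * log 2 (q (x!i) z / m z)))"
      unfolding obs P_def by (intro sum.cong refl) (simp add: algebra_simps)
    also have "\<dots> = (\<Sum>S\<in>Pow I. om p I S * ((1/k) * log 2 (q (x!i) (mk N x S) / m (mk N x S))))"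
      by (rule sum_obs[OF blc_len[OF C x] I])
    finally show ?thesis .
  qed
  have step5: "om p I S * ((1/k) * log 2 (q (x!i) (mk N x S) / m (mk N x S))) = - ((1/k) * (om p I S * DD C S i))"
    if x: "x \<in> C" and S: "S \<in> Pow I" for x S
  proof -
    have lx: "length x = N" using blc_len[OF C x] .
    have SI: "S \<subseteq> I" using S by auto
    have Pm: "P y (mk N x S) = (if \<forall>j\<in>S. y!j = x!j then om p I S else 0)" if "y \<in> C" for y
      unfolding P_def by (rule P_mk[OF blc_len[OF C that] lx I SI])
    have Sn: "S \<subseteq> {..<N}" using SI I by auto
    have iSn: "insert i S \<subseteq> {..<N}" using Sn i by auto
    have mm: "m (mk N x S) = (1/k) * om p I S * AA C S"
    proof -
      have "m (mk N x S) = (\<Sum>y\<in>C. if \<forall>j\<in>S. y!j = x!j then (1/k) * om p I S else 0)"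
        unfolding m' by (intro sum.cong refl) (simp add: Pm)
      also have "\<dots> = (1/k) * om p I S * card {y\<in>C. \<forall>j\<in>S. y!j = x!j}"
        by (rule sum_indicator_const[OF finC])
      also have "card {y\<in>C. \<forall>j\<in>S. y!j = x!j} = AA C S" by (rule card_agree[OF C x Sn])
      finally show ?thesis .
    qed
    have qq: "q (x!i) (mk N x S) = (1/k) * om p I S * AA C (insert i S)"
    proof -
      have "q (x!i) (mk N x S) = (\<Sum>y\<in>{y\<in>C. y!i = x!i}. if \<forall>j\<in>S. y!j = x!j then (1/k) * om p I S else 0)"
        unfolding q' by (intro sum.cong refl) (simp add: Pm)
      also have "\<dots> = (1/k) * om p I S * card {y\<in>{y\<in>C. y!i = x!i}. \<forall>j\<in>S. y!j = x!j}"
        by (rule sum_indicator_const) (use finC in auto)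
      also have "{y\<in>{y\<in>C. y!i = x!i}. \<forall>j\<in>S. y!j = x!j} = {y\<in>C. \<forall>j\<in>insert i S. y!j = x!j}" by auto
      also have "card {y\<in>C. \<forall>j\<in>insert i S. y!j = x!j} = AA C (insert i S)" by (rule card_agree[OF C x iSn])
      finally show ?thesis .
    qed
    show ?thesis
    proof (cases "om p I S = 0")
      case True then show ?thesis by simp
    next
      case False
      have a0: "real (AA C S) > 0" "real (AA C (insert i S)) > 0"
        using AA_pos[OF C Sn] AA_pos[OF C iSn] by auto
      have "q (x!i) (mk N x S) / m (mk N x S) = real (AA C (insert i S)) / real (AA C S)"
        unfolding qq mm using False kpos by (simp add: field_simps)
      then have "log 2 (q (x!i) (mk N x S) / m (mk N x S)) = - DD C S i"
        unfolding DD_def using a0 by (simp add: log_divide)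
      then show ?thesis by simp
    qed
  qed
  have "cond_entropy_omit N C p i = - (\<Sum>z\<in>obs_omit N i. \<Sum>x\<in>C. (1/k) * P x z * log 2 (q (x!i) z / m z))"
    unfolding step1 step2 ..
  also have "\<dots> = - (\<Sum>x\<in>C. \<Sum>z\<in>obs_omit N i. (1/k) * P x z * log 2 (q (x!i) z / m z))"
    by (subst sum.swap) rule
  also have "\<dots> = - (\<Sum>x\<in>C. \<Sum>S\<in>Pow I. - ((1/k) * (om p I S * DD C S i)))"
  proof (intro arg_cong[where f=uminus] sum.cong refl)
    fix x assume x: "x \<in> C"
    show "(\<Sum>z\<in>obs_omit N i. (1/k) * P x z * log 2 (q (x!i) z / m z)) = (\<Sum>S\<in>Pow I. - ((1/k) * (om p I S * DD C S i)))"
      unfolding step4[OF x] by (intro sum.cong refl step5[OF x])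
  qed
  also have "\<dots> = (\<Sum>x\<in>C. (1/k) * (\<Sum>S\<in>Pow I. om p I S * DD C S i))"
    by (simp add: sum_negf sum_distrib_left)
  also have "\<dots> = (\<Sum>S\<in>Pow I. om p I S * DD C S i)"
    using kpos by (simp add: k_def)
  finally show ?thesis unfolding I_def .
qed



lemma pow_split:
  assumes "finite U" "j \<in> U"
  shows "(\<Sum>S\<in>Pow U. g S) = (\<Sum>S\<in>Pow (U-{j}). g S + g (insert j S))"
proof -
  have U: "U = insert j (U-{j})" using assms by auto
  have "Pow U = Pow (U-{j}) \<union> insert j ` Pow (U-{j})" by (subst U, rule Pow_insert)
  moreover have "Pow (U-{j}) \<inter> insert j ` Pow (U-{j}) = {}" by auto
  moreover have "inj_on (insert j) (Pow (U-{j}))" by (rule inj_onI) auto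
  ultimately show ?thesis using assms
    by (simp add: sum.union_disjoint sum.reindex sum.distrib)
qed

lemma om_split: "finite I \<Longrightarrow> S \<subseteq> I \<Longrightarrow> om p I S = (\<Prod>j\<in>S. 1-p) * (\<Prod>j\<in>I-S. p)"
  unfolding om_def by (simp add: prod.If_cases Int_absorb1 Diff_eq)

lemma om_sum: "finite I \<Longrightarrow> (\<Sum>S\<in>Pow I. om p I S) = 1"
proof -
  assume f: "finite I"
  have "(\<Prod>j\<in>I. (1-p) + p) = (\<Sum>S\<in>Pow I. (\<Prod>j\<in>S. 1-p) * (\<Prod>j\<in>I-S. p))"
    by (rule prod_add[OF f])
  also have "\<dots> = (\<Sum>S\<in>Pow I. om p I S)" using f by (intro sum.cong refl) (simp add: om_split)
  finally show ?thesis by simp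
qed

lemma om_nonneg: "0 \<le> p \<Longrightarrow> p \<le> 1 \<Longrightarrow> om p I S \<ge> 0"
  unfolding om_def by (intro prod_nonneg) auto

lemma om_cong: "j \<notin> I \<Longrightarrow> om p I (insert j S) = om p I S"
  unfolding om_def by (intro prod.cong) auto

definition FF :: "nat \<Rightarrow> bool list set \<Rightarrow> real \<Rightarrow> nat \<Rightarrow> real" where
  "FF N C p i = (\<Sum>S\<in>Pow ({..<N}-{i}). om p ({..<N}-{i}) S * DD C S i)"

definition ff :: "nat \<Rightarrow> bool list set \<Rightarrow> real \<Rightarrow> real" where
  "ff N C p = (\<Sum>S\<in>Pow {..<N}. om p {..<N} S * log 2 (AA C S))"

lemma exit_fun_FF:
  assumes C: "binary_linear_code N C" and p: "0 \<le> p" "p \<le> 1"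
  shows "exit_fun N C p = (1 / real N) * (\<Sum>i<N. FF N C p i)"
  unfolding exit_fun_def FF_def using cond_entropy_formula[OF C _ p] by simp

lemma FF_bounds:
  assumes C: "binary_linear_code N C" and p: "0 \<le> p" "p \<le> 1" and i: "i < N"
  shows "0 \<le> FF N C p i" "FF N C p i \<le> 1"
proof -
  show "0 \<le> FF N C p i" unfolding FF_def
    using om_nonneg[OF p] by (intro sum_nonneg mult_nonneg_nonneg) (auto intro!: DD_ge0[OF C i])
  have "FF N C p i \<le> (\<Sum>S\<in>Pow ({..<N}-{i}). om p ({..<N}-{i}) S * 1)" unfolding FF_def
    using om_nonneg[OF p] by (intro sum_mono mult_left_mono) (auto intro!: DD_le1[OF C i])
  also have "\<dots> = 1" by (simp add: om_sum)
  finally show "FF N C p i \<le> 1" .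
qed

lemma exit_fun_bounds:
  assumes C: "binary_linear_code N C" and p: "0 \<le> p" "p \<le> 1" and N: "N > 0"
  shows "0 \<le> exit_fun N C p" "exit_fun N C p \<le> 1"
proof -
  show "0 \<le> exit_fun N C p" unfolding exit_fun_FF[OF C p]
    using FF_bounds(1)[OF C p] by (intro mult_nonneg_nonneg sum_nonneg) auto
  have "(\<Sum>i<N. FF N C p i) \<le> (\<Sum>i<N. 1)" using FF_bounds(2)[OF C p] by (intro sum_mono) auto
  then show "exit_fun N C p \<le> 1" unfolding exit_fun_FF[OF C p] using N by (simp add: field_simps)
qed

lemma ff_bounds:
  assumes C: "binary_linear_code N C" and p: "0 \<le> p" "p \<le> 1"
  shows "0 \<le> ff N C p" "ff N C p \<le> log 2 (card C)"
proof -
  have A1: "real (AA C S) \<ge> 1" if "S \<in> Pow {..<N}" for S using AA_pos[OF C] that by auto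
  have A2: "0 \<le> log 2 (real (AA C S))" if "S \<in> Pow {..<N}" for S using A1[OF that] by simp
  show "0 \<le> ff N C p" unfolding ff_def
    using om_nonneg[OF p] A2 by (intro sum_nonneg mult_nonneg_nonneg) auto
  have A3: "log 2 (real (AA C S)) \<le> log 2 (card C)" if "S \<in> Pow {..<N}" for S
    using A1[OF that] AA_le[OF C, of S] by simp
  have "ff N C p \<le> (\<Sum>S\<in>Pow {..<N}. om p {..<N} S * log 2 (card C))" unfolding ff_def
    using om_nonneg[OF p] A3 by (intro sum_mono mult_left_mono) auto
  also have "\<dots> = log 2 (card C)" by (simp add: om_sum flip: sum_distrib_right)
  finally show "ff N C p \<le> log 2 (card C)" .
qed

lemma om_deriv:
  "((\<lambda>p. om p I S) has_field_derivative (\<Sum>j\<in>I. (if j\<in>S then -1 else 1) * om p (I-{j}) S)) (at p)"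
  unfolding om_def
  by (rule has_field_derivative_prod) (auto intro!: derivative_eq_intros)

lemma ff_deriv:
  assumes C: "binary_linear_code N C"
  shows "((ff N C) has_field_derivative (\<Sum>i<N. FF N C p i)) (at p)"
proof -
  define U where "U = {..<N::nat}"
  have "((ff N C) has_field_derivative
      (\<Sum>S\<in>Pow U. (\<Sum>j\<in>U. (if j\<in>S then -1 else 1) * om p (U-{j}) S) * log 2 (AA C S))) (at p)"
    unfolding ff_def U_def by (intro DERIV_sum DERIV_cmult_right om_deriv)
  also have "(\<Sum>S\<in>Pow U. (\<Sum>j\<in>U. (if j\<in>S then -1 else 1) * om p (U-{j}) S) * log 2 (AA C S))
    = (\<Sum>j\<in>U. \<Sum>S\<in>Pow U. (if j\<in>S then -1 else 1) * om p (U-{j}) S * log 2 (AA C S))"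
    by (simp add: sum_distrib_right sum.swap[of _ "Pow U"])
  also have "\<dots> = (\<Sum>j\<in>U. FF N C p j)"
  proof (intro sum.cong refl)
    fix j assume j: "j \<in> U"
    have "(\<Sum>S\<in>Pow U. (if j\<in>S then -1 else 1) * om p (U-{j}) S * log 2 (AA C S))
       = (\<Sum>S\<in>Pow (U-{j}). (if j\<in>S then -1 else 1) * om p (U-{j}) S * log 2 (AA C S)
            + (if j\<in>insert j S then -1 else 1) * om p (U-{j}) (insert j S) * log 2 (AA C (insert j S)))"
      by (rule pow_split) (use j U_def in auto)
    also have "\<dots> = (\<Sum>S\<in>Pow (U-{j}). om p (U-{j}) S * DD C S j)"
      by (intro sum.cong refl) (auto simp: om_cong DD_def algebra_simps)
    finally show "(\<Sum>S\<in>Pow U. (if j\<in>S then -1 else 1) * om p (U-{j}) S * log 2 (AA C S)) = FF N C p j"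
      unfolding FF_def U_def .
  qed
  finally show ?thesis unfolding U_def .
qed

lemma FF_differentiable: "(\<lambda>p. FF N C p i) differentiable (at p)"
proof -
  have "((\<lambda>p. FF N C p i) has_field_derivative
     (\<Sum>S\<in>Pow ({..<N}-{i}). (\<Sum>j\<in>{..<N}-{i}. (if j\<in>S then -1 else 1) * om p ({..<N}-{i}-{j}) S) * DD C S i)) (at p)"
    unfolding FF_def by (intro DERIV_sum DERIV_cmult_right om_deriv)
  then show ?thesis unfolding real_differentiable_def by blast
qed



lemma block_error_bound:
  assumes C: "binary_linear_code N C" and p: "0 \<le> p" "p \<le> 1"
  shows "block_error N C p \<le> p * (\<Sum>i<N. FF N C p i)"
proof -
  define U where "U = {..<N::nat}"
  define k where "k = real (card C)"
  have finC: "finite C" using blc_finite[OF C] .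
  have kpos: "k > 0" using blc_card_pos[OF C] by (simp add: k_def)
  define E where "E x y = (\<exists>x'\<in>C. x' \<noteq> x \<and> compatible x' y)" for x y
  have DDnn: "DD C S i \<ge> 0" if "S \<in> Pow U" "i \<in> U" for S i
    using DD_ge0[OF C] that U_def by auto
  have inner: "(\<Sum>y\<in>{y::bool option list. length y = N}. if E x y then joint_prob N C p x y else 0)
      \<le> (\<Sum>S\<in>Pow U. om p U S * ((1/k) * (\<Sum>i\<in>U-S. DD C S i)))" if x: "x \<in> C" for x
  proof -
    have lx: "length x = N" using blc_len[OF C x] .
    have "(\<Sum>y\<in>{y::bool option list. length y = N}. if E x y then joint_prob N C p x y else 0)
       = (\<Sum>y\<in>{y. length y = N \<and> (\<forall>j<N. j\<notin>U \<longrightarrow> y!j = None)}.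
            (\<Prod>j\<in>U. bec_W p (x!j) (y!j)) * (if E x y then 1/k else 0))"
    proof -
      have set: "{y::bool option list. length y = N} = {y. length y = N \<and> (\<forall>j<N. j\<notin>U \<longrightarrow> y!j = None)}"
        by (auto simp: U_def)
      show ?thesis unfolding set
        by (intro sum.cong refl) (simp add: joint_prob_def k_def U_def)
    qed
    also have "\<dots> = (\<Sum>S\<in>Pow U. om p U S * (if E x (mk N x S) then 1/k else 0))"
      by (rule sum_obs[OF lx]) (simp add: U_def)
    also have "\<dots> \<le> (\<Sum>S\<in>Pow U. om p U S * ((1/k) * (\<Sum>i\<in>U-S. DD C S i)))"
    proof (intro sum_mono mult_left_mono om_nonneg p)
      fix S assume S: "S \<in> Pow U"
      show "(if E x (mk N x S) then 1/k else 0) \<le> (1/k) * (\<Sum>i\<in>U-S. DD C S i)"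
      proof (cases "E x (mk N x S)")
        case False
        have "0 \<le> (\<Sum>i\<in>U-S. DD C S i)" by (rule sum_nonneg) (use DDnn S in auto)
        then show ?thesis using False kpos by simp
      next
        case True
        then obtain x' where x': "x' \<in> C" "x' \<noteq> x" "compatible x' (mk N x S)" unfolding E_def by blast
        have lx': "length x' = N" using blc_len[OF C x'(1)] .
        have "\<exists>i<N. x!i \<noteq> x'!i"
        proof (rule ccontr)
          assume "\<not> ?thesis"
          then have "x = x'" using lx lx' by (intro nth_equalityI) auto
          then show False using x'(2) by simp
        qed
        then obtain i where i: "i < N" "x!i \<noteq> x'!i" by blast
        have agree: "x!j = x'!j" if "j \<in> S" for j
        proof -
          have "j < N" using that S U_def by auto
          then show ?thesis using x'(3) that unfolding compatible_def by (auto simp: mk_nth)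
        qed
        have iS: "i \<notin> S" using agree i by blast
        define c where "c = xor_vec x x'"
        have cC: "c \<in> C" unfolding c_def using blc_xor[OF C x x'(1)] .
        have ci: "c!i" unfolding c_def using i lx lx' by (simp add: xor_nth)
        have cS: "\<forall>j\<in>S. \<not> c!j" unfolding c_def using agree S lx lx' U_def by (auto simp: xor_nth)
        have SN: "S \<subseteq> {..<N}" using S U_def by auto
        have D1: "DD C S i = 1" using DD_cases[OF C i(1) SN] cC ci cS by blast
        have iU: "i \<in> U - S" using i iS U_def by auto
        have "1 \<le> (\<Sum>i\<in>U-S. DD C S i)"
          using member_le_sum[of i "U-S" "\<lambda>i. DD C S i"] iU D1 DDnn S U_def by auto
        then show ?thesis using True kpos by (simp add: field_simps)
      qed
    qed
    finally show ?thesis .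
  qed
  have "block_error N C p \<le> (\<Sum>x\<in>C. \<Sum>S\<in>Pow U. om p U S * ((1/k) * (\<Sum>i\<in>U-S. DD C S i)))"
    unfolding block_error_def E_def[symmetric] by (intro sum_mono inner)
  also have "\<dots> = (\<Sum>S\<in>Pow U. \<Sum>i\<in>U-S. om p U S * DD C S i)"
  proof -
    have "(\<Sum>x\<in>C. \<Sum>S\<in>Pow U. om p U S * ((1/k) * (\<Sum>i\<in>U-S. DD C S i)))
        = (\<Sum>x\<in>C. (1/k) * (\<Sum>S\<in>Pow U. om p U S * (\<Sum>i\<in>U-S. DD C S i)))"
      by (simp add: sum_distrib_left mult.left_commute)
    also have "\<dots> = (\<Sum>S\<in>Pow U. om p U S * (\<Sum>i\<in>U-S. DD C S i))"
      using kpos by (simp add: k_def)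
    also have "\<dots> = (\<Sum>S\<in>Pow U. \<Sum>i\<in>U-S. om p U S * DD C S i)"
      by (simp add: sum_distrib_left)
    finally show ?thesis .
  qed
  also have "\<dots> = (\<Sum>i\<in>U. \<Sum>S\<in>{S. S \<in> Pow U \<and> i \<notin> S}. om p U S * DD C S i)"
  proof -
    have "(\<Sum>S\<in>Pow U. \<Sum>i\<in>U-S. om p U S * DD C S i) = (\<Sum>S\<in>Pow U. \<Sum>i\<in>{i. i \<in> U \<and> i \<notin> S}. om p U S * DD C S i)"
      by (intro sum.cong) auto
    also have "\<dots> = (\<Sum>i\<in>U. \<Sum>S\<in>{S. S \<in> Pow U \<and> i \<notin> S}. om p U S * DD C S i)"
      by (rule sum.swap_restrict) (auto simp: U_def)
    finally show ?thesis .
  qed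
  also have "\<dots> = (\<Sum>i\<in>U. p * FF N C p i)"
  proof (intro sum.cong refl)
    fix i assume i: "i \<in> U"
    have st: "{S. S \<in> Pow U \<and> i \<notin> S} = Pow (U-{i})" using i by auto
    have omr: "om p U S = p * om p (U-{i}) S" if "i \<notin> S" for S
      unfolding om_def using i that by (subst prod.remove[of U i]) (auto simp: U_def)
    have "(\<Sum>S\<in>{S. S \<in> Pow U \<and> i \<notin> S}. om p U S * DD C S i)
        = (\<Sum>S\<in>Pow (U-{i}). p * (om p (U-{i}) S * DD C S i))"
      unfolding st by (intro sum.cong refl) (use omr in auto)
    also have "\<dots> = p * FF N C p i" unfolding FF_def U_def by (simp add: sum_distrib_left)
    finally show "(\<Sum>S\<in>{S. S \<in> Pow U \<and> i \<notin> S}. om p U S * DD C S i) = p * FF N C p i" .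
  qed
  finally show ?thesis by (simp add: U_def sum_distrib_left)
qed

lemma exit_deriv:
  assumes C: "binary_linear_code N C" and p: "0 < p" "p < 1"
  shows "(exit_fun N C has_field_derivative deriv (exit_fun N C) p) (at p)"
proof -
  define G where "G q = (1 / real N) * (\<Sum>i<N. FF N C q i)" for q
  have "G differentiable (at p)" unfolding G_def
    by (intro differentiable_mult differentiable_const differentiable_sum) (auto intro: FF_differentiable)
  then have dG: "(G has_field_derivative deriv G p) (at p)"
    using DERIV_deriv_iff_real_differentiable by blast
  have dE: "(exit_fun N C has_field_derivative deriv G p) (at p)"
    by (rule has_field_derivative_transform_within_open[OF dG, of "{0<..<1}"])
       (use p in \<open>auto simp: G_def exit_fun_FF[OF C]\<close>)
  then have "deriv (exit_fun N C) p = deriv G p" by (rule DERIV_imp_deriv)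
  then show ?thesis using dE by simp
qed

lemma ff_deriv_exit:
  assumes C: "binary_linear_code N C" and p: "0 \<le> p" "p \<le> 1" and N: "N > 0"
  shows "(ff N C has_field_derivative real N * exit_fun N C p) (at p)"
  using ff_deriv[OF C, of p] N by (simp add: exit_fun_FF[OF C p])

lemma block_error_exit:
  assumes C: "binary_linear_code N C" and p: "0 \<le> p" "p \<le> 1" and N: "N > 0"
  shows "block_error N C p \<le> real N * exit_fun N C p"
proof -
  have s0: "0 \<le> (\<Sum>i<N. FF N C p i)" using FF_bounds(1)[OF C p] by (intro sum_nonneg) auto
  have "block_error N C p \<le> p * (\<Sum>i<N. FF N C p i)" by (rule block_error_bound[OF C p])
  also have "\<dots> \<le> (\<Sum>i<N. FF N C p i)" using p s0 by (simp add: mult_left_le_one_le)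
  also have "\<dots> = real N * exit_fun N C p" using N by (simp add: exit_fun_FF[OF C p])
  finally show ?thesis .
qed



lemma mono_h:
  fixes h h' :: "real \<Rightarrow> real"
  assumes der: "\<And>t. a < t \<Longrightarrow> t < b \<Longrightarrow> (h has_field_derivative h' t) (at t)"
    and pos: "\<And>t. a < t \<Longrightarrow> t < b \<Longrightarrow> h' t \<ge> 0"
    and st: "a < s" "s \<le> t" "t < b"
  shows "h s \<le> h t"
  by (rule DERIV_nonneg_imp_nondecreasing[OF st(2)]) (use der pos st in \<open>force\<close>)

locale logi =
  fixes h h' :: "real \<Rightarrow> real" and a b L :: real
  assumes der: "\<And>t. a < t \<Longrightarrow> t < b \<Longrightarrow> (h has_field_derivative h' t) (at t)"
    and ineq: "\<And>t. a < t \<Longrightarrow> t < b \<Longrightarrow> h' t \<ge> L * h t * (1 - h t)"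
    and h0: "\<And>t. a < t \<Longrightarrow> t < b \<Longrightarrow> 0 \<le> h t"
    and h1: "\<And>t. a < t \<Longrightarrow> t < b \<Longrightarrow> h t \<le> 1"
    and L0: "0 \<le> L"
begin

lemma hpos: "a < t \<Longrightarrow> t < b \<Longrightarrow> h' t \<ge> 0"
  using ineq[of t] h0[of t] h1[of t] L0 by (smt (verit) mult_nonneg_nonneg)

lemma mono: "a < s \<Longrightarrow> s \<le> t \<Longrightarrow> t < b \<Longrightarrow> h s \<le> h t"
  by (rule mono_h[OF der hpos])

lemma low:
  assumes pq: "a < p" "p < q" "q < b" and hq: "h q \<le> 1/2"
  shows "h p \<le> exp (-(L/2) * (q - p))"
proof (cases "h p = 0")
  case True then show ?thesis by simp
next
  case False
  then have hp: "h p > 0" using h0[of p] pq by auto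
  have range: "h p \<le> h t" "h t \<le> 1/2" if "p \<le> t" "t \<le> q" for t
    using mono[of p t] mono[of t q] that pq hq by auto
  have d: "((\<lambda>t. ln (h t)) has_field_derivative h' t / h t) (at t)" if "p \<le> t" "t \<le> q" for t
  proof -
    have "h t > 0" using range(1)[OF that] hp by linarith
    then show ?thesis using der[of t] that pq
      by (auto intro!: derivative_eq_intros simp: field_simps)
  qed
  obtain z where z: "p < z" "z < q" "ln (h q) - ln (h p) = (q - p) * (h' z / h z)"
    using MVT2[OF pq(2) d] by blast
  have hz: "h z > 0" "h z \<le> 1/2" using range[of z] z hp by auto
  have "h' z \<ge> L * h z * (1 - h z)" using ineq[of z] z pq by auto
  also have "L * h z * (1 - h z) \<ge> L * h z * (1/2)" using hz L0 by (intro mult_left_mono) auto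
  finally have "h' z / h z \<ge> L/2" using hz by (simp add: field_simps)
  then have "(q - p) * (h' z / h z) \<ge> (q-p) * (L/2)" using pq by (intro mult_left_mono) auto
  moreover have "ln (h q) \<le> 0" using hz range[of q] hp pq by auto
  moreover have "-(L/2) * (q - p) = -((q-p) * (L/2))" by simp
  ultimately have "ln (h p) \<le> -(L/2) * (q - p)" using z(3) by linarith
  then show ?thesis using hp by (metis exp_le_cancel_iff exp_ln)
qed

lemma high:
  assumes qt: "a < q" "q < t" "t < b" and hq: "h q \<ge> 1/2"
  shows "1 - h t \<le> exp (-(L/2) * (t - q))"
proof (cases "h t = 1")
  case True then show ?thesis by simp
next
  case False
  then have ht: "h t < 1" using h1[of t] qt by auto
  have range: "1/2 \<le> h s" "h s \<le> h t" if "q \<le> s" "s \<le> t" for s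
    using mono[of q s] mono[of s t] that qt hq by auto
  have d: "((\<lambda>s. ln (1 - h s)) has_field_derivative - h' s / (1 - h s)) (at s)" if "q \<le> s" "s \<le> t" for s
  proof -
    have "1 - h s > 0" using range(2)[OF that] ht by linarith
    then show ?thesis using der[of s] that qt
      by (auto intro!: derivative_eq_intros simp: field_simps)
  qed
  obtain z where z: "q < z" "z < t" "ln (1 - h t) - ln (1 - h q) = (t - q) * (- h' z / (1 - h z))"
    using MVT2[OF qt(2) d] by blast
  have hz: "h z \<ge> 1/2" "1 - h z > 0" using range[of z] z ht by auto
  have "h' z \<ge> L * h z * (1 - h z)" using ineq[of z] z qt by auto
  also have "L * h z * (1 - h z) \<ge> L * (1/2) * (1 - h z)" using hz L0
    by (intro mult_right_mono mult_left_mono) auto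
  finally have "h' z / (1 - h z) \<ge> L/2" using hz by (simp add: field_simps)
  then have "(t - q) * (h' z / (1 - h z)) \<ge> (t-q) * (L/2)" using qt by (intro mult_left_mono) auto
  moreover have "(t - q) * (- h' z / (1 - h z)) = - ((t - q) * (h' z / (1 - h z)))" by simp
  ultimately have "(t - q) * (- h' z / (1 - h z)) \<le> -((t-q) * (L/2))" by linarith
  moreover have "ln (1 - h q) \<le> 0" using hq range[of q] ht qt by auto
  moreover have "-(L/2) * (t - q) = -((t-q) * (L/2))" by simp
  ultimately have "ln (1 - h t) \<le> -(L/2) * (t - q)" using z(3) by linarith
  then show ?thesis using ht by (metis diff_gt_0_iff_gt exp_le_cancel_iff exp_ln)
qed

end

lemma area:
  fixes f h :: "real \<Rightarrow> real"
  assumes qt: "q < t" and der: "\<And>s. q \<le> s \<Longrightarrow> s \<le> t \<Longrightarrow> (f has_field_derivative M * h s) (at s)"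
    and hb: "\<And>s. q \<le> s \<Longrightarrow> s \<le> t \<Longrightarrow> h s \<ge> c" and M: "M \<ge> 0"
    and f0: "f q \<ge> 0" and fK: "f t \<le> K"
  shows "M * c * (t - q) \<le> K"
proof -
  obtain z where z: "q < z" "z < t" "f t - f q = (t - q) * (M * h z)"
    using MVT2[OF qt der] by blast
  have "M * c \<le> M * h z" using hb[of z] z M by (intro mult_left_mono) auto
  then have "M * c * (t - q) \<le> (t - q) * (M * h z)" using qt by (simp add: mult.commute mult_left_mono)
  then show ?thesis using z f0 fK by linarith
qed



lemma block_nonneg:
  assumes C: "binary_linear_code N C" and p: "0 \<le> p" "p \<le> 1"
  shows "0 \<le> block_error N C p"
  unfolding block_error_def joint_prob_def
  using p by (intro sum_nonneg) (auto intro!: divide_nonneg_nonneg prod_nonneg bec_W_nonneg)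

lemma core:
  fixes N :: nat and C :: "bool list set" and a b w p \<delta> r :: real
  assumes C: "binary_linear_code N C" and N: "N > 0"
    and ab: "0 \<le> a" "a < p" "b \<le> 1" "1 - \<delta> < b"
    and d: "\<delta> > 0" and p: "0 < p" "p + 4*\<delta> = 1 - r" and r: "0 < r"
    and w: "w \<ge> 0"
    and slope: "\<And>t. a < t \<Longrightarrow> t < b \<Longrightarrow>
       deriv (exit_fun N C) t \<ge> w * ln (real N) * exit_fun N C t * (1 - exit_fun N C t)"
    and rate: "code_rate N C < r + \<delta>/2"
    and eps: "exp (-(w * ln (real N)/2) * \<delta>) < \<delta> / (2*(r+\<delta>))"
  shows "block_error N C p \<le> real N * exp (-(w * ln (real N)/2) * \<delta>)"
proof -
  define h where "h = exit_fun N C"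
  define L where "L = w * ln (real N)"
  define \<epsilon> where "\<epsilon> = exp (-(L/2) * \<delta>)"
  have L0: "L \<ge> 0" unfolding L_def using w N by simp
  interpret logi h "deriv h" a b L
  proof
    fix t assume t: "a < t" "t < b"
    then have t01: "0 < t" "t < 1" using ab by auto
    show "(h has_field_derivative deriv h t) (at t)" unfolding h_def by (rule exit_deriv[OF C t01])
    show "L * h t * (1 - h t) \<le> deriv h t" unfolding h_def L_def using slope[OF t] .
    show "0 \<le> h t" "h t \<le> 1" unfolding h_def using exit_fun_bounds[OF C _ _ N] t01 by auto
  qed (rule L0)
  define q1 where "q1 = p + \<delta>"
  define q2 where "q2 = p + 2*\<delta>"
  define t0 where "t0 = 1 - \<delta>"
  have ord: "a < p" "p < q1" "q1 < q2" "q2 < t0" "t0 < b" "t0 - q2 = r + \<delta>"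
    using ab d p r by (auto simp: q1_def q2_def t0_def)
  have hq1: "h q1 \<le> 1/2"
  proof (rule ccontr)
    assume "\<not> ?thesis"
    then have hq: "h q1 \<ge> 1/2" by simp
    have hb: "h s \<ge> 1 - \<epsilon>" if "q2 \<le> s" "s \<le> t0" for s
    proof -
      have "1 - h s \<le> exp (-(L/2) * (s - q1))" using high[OF _ _ _ hq] ord that by auto
      also have "\<dots> \<le> \<epsilon>" unfolding \<epsilon>_def using L0 that by (auto simp: q1_def q2_def intro!: mult_left_mono)
      finally show ?thesis by simp
    qed
    have der: "(ff N C has_field_derivative real N * h s) (at s)" if "q2 \<le> s" "s \<le> t0" for s
      unfolding h_def using that ord ab p d by (intro ff_deriv_exit[OF C _ _ N]) auto
    have f0: "ff N C q2 \<ge> 0" using ff_bounds(1)[OF C] ord ab p d by auto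
    have fK: "ff N C t0 \<le> log 2 (card C)" using ff_bounds(2)[OF C] ord ab p d by auto
    have "real N * (1 - \<epsilon>) * (t0 - q2) \<le> log 2 (card C)"
      by (rule area[OF ord(4) der hb _ f0 fK]) auto
    then have "(1 - \<epsilon>) * (r + \<delta>) \<le> code_rate N C"
      using N ord by (simp add: code_rate_def field_simps)
    moreover have "\<epsilon> < \<delta> / (2*(r+\<delta>))" using eps unfolding \<epsilon>_def L_def .
    then have "\<epsilon> * (r + \<delta>) < \<delta>/2" using r d by (simp add: field_simps)
    ultimately show False using rate by (simp add: algebra_simps)
  qed
  have "h p \<le> exp (-(L/2) * (q1 - p))" by (rule low[OF ord(1,2) _ hq1]) (use ord in auto)
  then have hp: "h p \<le> \<epsilon>" by (simp add: q1_def \<epsilon>_def)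
  have "block_error N C p \<le> real N * h p"
    unfolding h_def using block_error_exit[OF C _ _ N] p r d by auto
  also have "\<dots> \<le> real N * \<epsilon>" using hp by (intro mult_left_mono) auto
  finally show ?thesis by (simp add: \<epsilon>_def L_def)
qed



theorem theorem5:
  fixes N :: "nat \<Rightarrow> nat" and C :: "nat \<Rightarrow> bool list set"
    and r :: real and a b w :: "nat \<Rightarrow> real"
  assumes codes: "\<And>n. binary_linear_code (N n) (C n) \<and> proper_code (N n) (C n)
                        \<and> min_dist_ge 2 (C n)"
    and N_lim: "filterlim N at_top sequentially"
    and rate_lim: "(\<lambda>n. code_rate (N n) (C n)) \<longlonglongrightarrow> r"
    and r_pos: "0 < r" and r_lt1: "r < 1"
    and ab: "\<And>n. 0 \<le> a n \<and> a n < b n \<and> b n \<le> 1"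
    and a_lim: "a \<longlonglongrightarrow> 0" and b_lim: "b \<longlonglongrightarrow> 1"
    and w_lim: "filterlim w at_top sequentially"
    and slope: "\<And>n p. a n < p \<Longrightarrow> p < b n \<Longrightarrow>
       deriv (exit_fun (N n) (C n)) p
         \<ge> w n * ln (real (N n)) * exit_fun (N n) (C n) p * (1 - exit_fun (N n) (C n) p)"
  shows "capacity_achieving N C r"
proof -
  have C: "\<And>n. binary_linear_code (N n) (C n)" using codes by blast
  show ?thesis unfolding capacity_achieving_def
  proof (intro allI impI)
    fix p assume p: "0 \<le> p \<and> p < 1 - r"
    show "(\<lambda>n. block_error (N n) (C n) p) \<longlonglongrightarrow> 0"
    proof (cases "p = 0")
      case True
      have "block_error (N n) (C n) p = 0" for n
        using block_error_bound[OF C, of p n] block_nonneg[OF C, of p n] True by simp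
      then show ?thesis by simp
    next
      case False
      then have p0: "p > 0" using p by simp
      define \<delta> where "\<delta> = (1 - r - p) / 4"
      have d1: "\<delta> > 0" using p by (simp add: \<delta>_def)
      have d2: "p + 4*\<delta> = 1 - r" unfolding \<delta>_def by (simp add: field_simps)
      note d = d1 d2
      define L where "L n = w n * ln (real (N n))" for n
      define B where "B n = real (N n) * exp (-(L n/2) * \<delta>)" for n
      have NR: "filterlim (\<lambda>n. real (N n)) at_top sequentially"
        by (rule filterlim_compose[OF filterlim_real_sequentially N_lim])
      have lnN: "filterlim (\<lambda>n. ln (real (N n))) at_top sequentially"
        by (rule filterlim_compose[OF ln_at_top NR])
      have Llim: "filterlim L at_top sequentially"
        unfolding L_def by (rule filterlim_at_top_mult_at_top[OF w_lim lnN])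
      have "filterlim (\<lambda>n. \<delta>/2 * L n) at_top sequentially"
        by (rule filterlim_tendsto_pos_mult_at_top[OF tendsto_const _ Llim]) (use d in simp)
      then have "filterlim (\<lambda>n. - (\<delta>/2 * L n)) at_bot sequentially"
        by (simp add: filterlim_uminus_at_top)
      then have "(\<lambda>n. exp (- (\<delta>/2 * L n))) \<longlonglongrightarrow> 0"
        by (rule filterlim_compose[OF exp_at_bot])
      then have elim: "(\<lambda>n. exp (-(L n/2) * \<delta>)) \<longlonglongrightarrow> 0" by (simp add: algebra_simps)
      have "filterlim (\<lambda>n. \<delta>/2 * w n) at_top sequentially"
        by (rule filterlim_tendsto_pos_mult_at_top[OF tendsto_const _ w_lim]) (use d in simp)
      then have "filterlim (\<lambda>n. -1 + \<delta>/2 * w n) at_top sequentially"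
        by (rule filterlim_tendsto_add_at_top[OF tendsto_const])
      then have "filterlim (\<lambda>n. ln (real (N n)) * (-1 + \<delta>/2 * w n)) at_top sequentially"
        by (rule filterlim_at_top_mult_at_top[OF lnN])
      then have "filterlim (\<lambda>n. - (ln (real (N n)) * (-1 + \<delta>/2 * w n))) at_bot sequentially"
        by (simp add: filterlim_uminus_at_top)
      then have B0: "(\<lambda>n. exp (- (ln (real (N n)) * (-1 + \<delta>/2 * w n)))) \<longlonglongrightarrow> 0"
        by (rule filterlim_compose[OF exp_at_bot])
      have evN: "eventually (\<lambda>n. 1 \<le> real (N n)) sequentially"
        using NR unfolding filterlim_at_top by blast
      have Blim: "B \<longlonglongrightarrow> 0"
      proof (rule Lim_transform_eventually[OF B0])
        show "eventually (\<lambda>n. exp (- (ln (real (N n)) * (-1 + \<delta>/2 * w n))) = B n) sequentially"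
        proof (rule eventually_mono[OF evN])
          fix n assume n: "1 \<le> real (N n)"
          have "exp (- (ln (real (N n)) * (-1 + \<delta>/2 * w n))) = exp (ln (real (N n)) + (-(L n/2) * \<delta>))"
            by (simp add: L_def algebra_simps)
          also have "\<dots> = exp (ln (real (N n))) * exp (-(L n/2) * \<delta>)" by (rule exp_add)
          also have "\<dots> = B n" using n by (simp only: B_def) simp
          finally show "exp (- (ln (real (N n)) * (-1 + \<delta>/2 * w n))) = B n" .
        qed
      qed
      have ev2: "eventually (\<lambda>n. a n < p) sequentially" by (rule order_tendstoD(2)[OF a_lim p0])
      have ev3: "eventually (\<lambda>n. 1 - \<delta> < b n) sequentially" by (rule order_tendstoD(1)[OF b_lim]) (use d in simp)
      have ev4: "eventually (\<lambda>n. 0 \<le> w n) sequentially" using w_lim by (simp add: filterlim_at_top)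
      have ev5: "eventually (\<lambda>n. code_rate (N n) (C n) < r + \<delta>/2) sequentially"
        by (rule order_tendstoD(2)[OF rate_lim]) (use d in simp)
      have ev6: "eventually (\<lambda>n. exp (-(L n/2) * \<delta>) < \<delta> / (2*(r+\<delta>))) sequentially"
        by (rule order_tendstoD(2)[OF elim]) (use d r_pos in simp)
      have evB: "eventually (\<lambda>n. block_error (N n) (C n) p \<le> B n) sequentially"
      proof (rule eventually_mono[OF eventually_conj[OF evN eventually_conj[OF ev2 eventually_conj[OF ev3
             eventually_conj[OF ev4 eventually_conj[OF ev5 ev6]]]]]])
        fix n assume n: "1 \<le> real (N n) \<and> a n < p \<and> 1 - \<delta> < b n \<and> 0 \<le> w n \<and>
          code_rate (N n) (C n) < r + \<delta>/2 \<and> exp (-(L n/2) * \<delta>) < \<delta> / (2*(r+\<delta>))"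
        show "block_error (N n) (C n) p \<le> B n" unfolding B_def L_def
          by (rule core[OF C _ _ _ _ _ d(1) p0 d(2) r_pos _ slope])
             (use n ab[of n] in \<open>auto simp: L_def\<close>)
      qed
      have ev0: "eventually (\<lambda>n. 0 \<le> block_error (N n) (C n) p) sequentially"
      proof (rule always_eventually, rule allI)
        fix n show "0 \<le> block_error (N n) (C n) p" using block_nonneg[OF C] p d r_pos by auto
      qed
      show ?thesis by (rule tendsto_sandwich[OF ev0 evB tendsto_const Blim])
    qed
  qed
qed


end
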